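(* Let $n$ be a positive integer, $I$ an index set, and $(A_i)_{i\in I}$ a family of pairwise commuting matrices in $M_n(\mathbb{C})$ such that the sum $\sum_{i\in I} A_i^* A_i$ converges. Then there is a family $(B_i)_{i\in I}$ of pairwise commuting normal matrices in $M_n(\mathbb{C})$ such that $$\sum_{i\in I}\|A_i-B_i\|_2^2\le n\cdot sw\Big(\sum_{i\in I}A_i^*A_i\Big).$$
   Context: $M_n(\mathbb{C})$ denotes the complex $n\times n$ matrices acting on $\mathbb{C}^n$ with its standard inner product $\langle\cdot\mid\cdot\rangle$ (linear in the second variable). For $A=(a_{jk})\in M_n(\mathbb{C})$, $\|A\|_2=\big(\sum_{j,k}|a_{jk}|^2\big)^{1/2}$ is the Hilbert–Schmidt (Frobenius) norm. The numerical range of an operator $A$ is $W(A)=\{\langle \xi\mid A\xi\rangle : \|\xi\|=1\}\subset\mathbb{C}$, and the numerical spread is $sw(A)=\operatorname{diam}W(A)=\sup_{z,z'\in W(A)}|z-z'|$. The sum over the (possibly infinite) index set is the limit of the net of finite partial sums. *)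

theory Defs
  imports "HOL-Analysis.Analysis"
begin

text \<open>Complex n x n matrices are rendered as complex^'n^'n with a finite index type 'n
  (so n = CARD('n) >= 1). Matrix product is (**), matrix-vector product is (*v).\<close>

definition adj :: "complex^'n^'n \<Rightarrow> complex^'n^'n" where
  "adj A = (\<chi> i j. cnj (A $ j $ i))"

definition normal_matrix :: "complex^'n^'n \<Rightarrow> bool" where
  "normal_matrix A \<longleftrightarrow> adj A ** A = A ** adj A"

text \<open>Hilbert-Schmidt (Frobenius) norm.\<close>
definition hs_norm :: "complex^'n^'n \<Rightarrow> real" where
  "hs_norm A = sqrt (\<Sum>j\<in>UNIV. \<Sum>k\<in>UNIV. (cmod (A $ j $ k))\<^sup>2)"

text \<open>Standard inner product on complex^'n, linear in the second variable.\<close>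
definition cinner :: "complex^'n \<Rightarrow> complex^'n \<Rightarrow> complex" where
  "cinner x y = (\<Sum>k\<in>UNIV. cnj (x $ k) * y $ k)"

definition vnorm :: "complex^'n \<Rightarrow> real" where
  "vnorm x = sqrt (\<Sum>k\<in>UNIV. (cmod (x $ k))\<^sup>2)"

text \<open>Numerical range.\<close>
definition num_range :: "complex^'n^'n \<Rightarrow> complex set" where
  "num_range A = {cinner \<xi> (A *v \<xi>) | \<xi>. vnorm \<xi> = 1}"

text \<open>Numerical spread: the diameter of the numerical range.\<close>
definition num_spread :: "complex^'n^'n \<Rightarrow> real" where
  "num_spread A = (SUP p\<in>num_range A \<times> num_range A. cmod (fst p - snd p))"

end

theory Submission
  imports Defs "HOL-Computational_Algebra.Fundamental_Theorem_Algebra"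
begin

definition nsq :: "complex^'n \<Rightarrow> real" where
  "nsq x = (\<Sum>k\<in>UNIV. (cmod (x $ k))\<^sup>2)"

lemma cinner_add_right: "cinner x (y + z) = cinner x y + cinner x z"
  by (simp add: cinner_def algebra_simps sum.distrib)
lemma cinner_diff_right: "cinner x (y - z) = cinner x y - cinner x z"
  by (simp add: cinner_def algebra_simps sum_subtractf)
lemma cinner_scale_right: "cinner x (c *s y) = c * cinner x y"
  by (simp add: cinner_def algebra_simps sum_distrib_left)
lemma cinner_add_left: "cinner (x + y) z = cinner x z + cinner y z"
  by (simp add: cinner_def algebra_simps sum.distrib)
lemma cinner_diff_left: "cinner (x - y) z = cinner x z - cinner y z"
  by (simp add: cinner_def algebra_simps sum_subtractf)
lemma cinner_scale_left: "cinner (c *s x) y = cnj c * cinner x y"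
  by (simp add: cinner_def algebra_simps sum_distrib_left)
lemma cinner_zero_right[simp]: "cinner x 0 = 0"
  by (simp add: cinner_def)
lemma cinner_zero_left[simp]: "cinner 0 x = 0"
  by (simp add: cinner_def)
lemma cinner_sum_right: "cinner x (\<Sum>k\<in>K. f k) = (\<Sum>k\<in>K. cinner x (f k))"
  by (induction K rule: infinite_finite_induct) (auto simp: cinner_add_right)
lemma cinner_sum_left: "cinner (\<Sum>k\<in>K. f k) x = (\<Sum>k\<in>K. cinner (f k) x)"
  by (induction K rule: infinite_finite_induct) (auto simp: cinner_add_left)
lemma cinner_cnj: "cnj (cinner x y) = cinner y x"
  by (simp add: cinner_def mult.commute)
lemma cinner_self: "cinner x x = complex_of_real (nsq x)"
  unfolding cinner_def nsq_def
  by (simp add: complex_norm_square[symmetric] mult.commute)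
lemma nsq_nonneg: "nsq x \<ge> 0"
  by (simp add: nsq_def sum_nonneg)
lemma nsq_eq_0: "nsq x = 0 \<longleftrightarrow> x = 0"
  unfolding nsq_def
  by (simp add: sum_nonneg_eq_0_iff vec_eq_iff)
lemma cinner_self_eq_0: "cinner x x = 0 \<longleftrightarrow> x = 0"
  by (simp add: cinner_self nsq_eq_0)
lemma vnorm_nsq: "vnorm x = sqrt (nsq x)"
  by (simp add: vnorm_def nsq_def)

lemma matvec_scale: "(M::complex^'n^'n) *v (c *s x) = c *s (M *v x)"
  by (rule vector_scalar_commute)

lemma matvec_sum: "(M::complex^'n^'n) *v (\<Sum>k\<in>K. f k) = (\<Sum>k\<in>K. M *v f k)"
  by (induction K rule: infinite_finite_induct) (auto simp: matrix_vector_right_distrib)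

lemma cinner_adj: "cinner x (adj A *v y) = cinner (A *v x) y"
proof -
  have "cinner x (adj A *v y) = (\<Sum>k\<in>UNIV. \<Sum>l\<in>UNIV. cnj (x $ k) * (cnj (A $ l $ k) * y $ l))"
    unfolding cinner_def adj_def matrix_vector_mult_def by (simp add: sum_distrib_left)
  also have "\<dots> = (\<Sum>l\<in>UNIV. \<Sum>k\<in>UNIV. cnj (x $ k) * (cnj (A $ l $ k) * y $ l))"
    by (rule sum.swap)
  also have "\<dots> = cinner (A *v x) y"
    unfolding cinner_def matrix_vector_mult_def by (simp add: sum_distrib_right sum_distrib_left mult_ac)
  finally show ?thesis .
qed

lemma cinner_adj': "cinner (adj A *v x) y = cinner x (A *v y)"
  by (metis cinner_adj cinner_cnj)


definition csub :: "(complex^'n) set \<Rightarrow> bool" where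
  "csub S \<longleftrightarrow> 0 \<in> S \<and> (\<forall>x\<in>S. \<forall>y\<in>S. x + y \<in> S) \<and> (\<forall>c x. x \<in> S \<longrightarrow> c *s x \<in> S)"

lemma csub_0: "csub S \<Longrightarrow> 0 \<in> S" by (simp add: csub_def)
lemma csub_add: "csub S \<Longrightarrow> x \<in> S \<Longrightarrow> y \<in> S \<Longrightarrow> x + y \<in> S" by (simp add: csub_def)
lemma csub_scale: "csub S \<Longrightarrow> x \<in> S \<Longrightarrow> c *s x \<in> S" by (simp add: csub_def)
lemma csub_neg: "csub S \<Longrightarrow> x \<in> S \<Longrightarrow> - x \<in> S"
  using csub_scale[of S x "-1"] by (simp add: vector_sneg_minus1[symmetric])
lemma csub_diff: "csub S \<Longrightarrow> x \<in> S \<Longrightarrow> y \<in> S \<Longrightarrow> x - y \<in> S"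
  using csub_add[of S x "-y"] csub_neg[of S y] by simp
lemma csub_sum: "csub S \<Longrightarrow> (\<And>k. k \<in> K \<Longrightarrow> f k \<in> S) \<Longrightarrow> (\<Sum>k\<in>K. f k) \<in> S"
  by (induction K rule: infinite_finite_induct) (auto simp: csub_0 csub_add)
lemma scaleR_as_smult: "c *\<^sub>R (x::complex^'n) = complex_of_real c *s x"
proof (unfold vec_eq_iff, intro allI)
  fix i
  have "(c *\<^sub>R x) $ i = c *\<^sub>R (x $ i)" by (rule vector_scaleR_component)
  also have "\<dots> = complex_of_real c * x $ i" by (rule scaleR_conv_of_real)
  finally show "(c *\<^sub>R x) $ i = (complex_of_real c *s x) $ i" by simp
qed

lemma csub_subspace: fixes S :: "(complex^'n) set" shows "csub S \<Longrightarrow> subspace S"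
  unfolding subspace_def
proof (intro conjI ballI allI)
  assume "csub S"
  then show "0 \<in> S" "\<And>x y. x \<in> S \<Longrightarrow> y \<in> S \<Longrightarrow> x + y \<in> S" by (auto simp: csub_def)
  fix c :: real and x :: "complex^'n" assume "x \<in> S"
  have "c *\<^sub>R x = complex_of_real c *s x" by (rule scaleR_as_smult)
  then show "c *\<^sub>R x \<in> S" using \<open>csub S\<close> \<open>x \<in> S\<close> csub_scale by metis
qed
lemma csub_UNIV: "csub UNIV" by (simp add: csub_def)

definition iter :: "complex^'n^'n \<Rightarrow> nat \<Rightarrow> complex^'n \<Rightarrow> complex^'n" where
  "iter M k x = ((\<lambda>y. M *v y) ^^ k) x"

lemma iter_0[simp]: "iter M 0 x = x" by (simp add: iter_def)
lemma iter_Suc: "iter M (Suc k) x = M *v iter M k x" by (simp add: iter_def)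

definition pv :: "complex poly \<Rightarrow> complex^'n^'n \<Rightarrow> complex^'n \<Rightarrow> complex^'n" where
  "pv p M x = (\<Sum>k\<le>degree p. coeff p k *s iter M k x)"

lemma pv_bound:
  assumes "degree p \<le> N"
  shows "pv p M x = (\<Sum>k\<le>N. coeff p k *s iter M k x)"
  unfolding pv_def
  by (rule sum.mono_neutral_left) (use assms in \<open>auto simp: coeff_eq_0\<close>)

lemma pv_add: "pv (p + q) M x = pv p M x + pv q M x"
proof -
  define N where "N = max (degree p) (degree q)"
  have "degree (p + q) \<le> N" "degree p \<le> N" "degree q \<le> N"
    using degree_add_le_max[of p q] by (auto simp: N_def)
  then show ?thesis
    by (simp add: pv_bound[of _ N] vector_sadd_rdistrib sum.distrib)
qed

lemma pv_smult: "pv (smult c p) M x = c *s pv p M x"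
proof -
  have "degree (smult c p) \<le> degree p" by simp
  then show ?thesis
    by (simp add: pv_bound[of _ "degree p"] sum_cmul[symmetric] vector_smult_assoc)
qed

lemma pv_pCons0: "pv (pCons 0 q) M x = M *v pv q M x"
proof -
  have d: "degree (pCons 0 q) \<le> Suc (degree q)" by simp
  have "pv (pCons 0 q) M x = (\<Sum>k\<le>Suc (degree q). coeff (pCons 0 q) k *s iter M k x)"
    by (rule pv_bound[OF d])
  also have "\<dots> = (\<Sum>k\<le>degree q. coeff q k *s iter M (Suc k) x)"
    by (simp only: sum.atMost_Suc_shift) simp
  also have "\<dots> = M *v pv q M x"
    by (simp add: pv_def matvec_sum matvec_scale iter_Suc)
  finally show ?thesis .
qed

lemma pv_linfactor: "pv ([:-r, 1:] * q) M x = M *v pv q M x - r *s pv q M x"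
proof -
  have "[:-r, 1:] * q = smult (-r) q + pCons 0 q"
    by (simp add: mult_pCons_left)
  then show ?thesis
    by (simp only: pv_add pv_smult pv_pCons0 vector_smult_lneg) (simp add: algebra_simps)
qed

lemma pv_diff: "pv (p - q) M x = pv p M x - pv q M x"
proof -
  have "p - q = p + smult (-1) q" by simp
  then show ?thesis by (simp only: pv_add pv_smult) (simp add: vector_sneg_minus1[symmetric])
qed

lemma pv_monom: "pv (monom c k) M x = c *s iter M k x"
proof -
  have "degree (monom c k) \<le> k" by (simp add: degree_monom_le)
  then have "pv (monom c k) M x = (\<Sum>j\<le>k. coeff (monom c k) j *s iter M j x)"
    by (rule pv_bound)
  also have "\<dots> = (\<Sum>j\<le>k. if j = k then c *s iter M k x else 0)"
    by (rule sum.cong) auto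
  also have "\<dots> = c *s iter M k x"
    by simp
  finally show ?thesis .
qed

lemma iter_in: "(\<And>v. v \<in> V \<Longrightarrow> M *v v \<in> V) \<Longrightarrow> x \<in> V \<Longrightarrow> iter M k x \<in> V"
  by (induction k) (auto simp: iter_Suc)

lemma pv_in: "csub V \<Longrightarrow> (\<And>v. v \<in> V \<Longrightarrow> M *v v \<in> V) \<Longrightarrow> x \<in> V \<Longrightarrow> pv p M x \<in> V"
  unfolding pv_def by (intro csub_sum csub_scale iter_in) auto

lemma eig_desc:
  assumes U: "csub U" and V: "csub V" and UV: "U \<subseteq> V"
    and MV: "\<And>v. v \<in> V \<Longrightarrow> M *v v \<in> V"
    and x: "x \<in> V" "x \<notin> U"
  shows "p \<noteq> 0 \<Longrightarrow> pv p M x \<in> U \<Longrightarrow> \<exists>\<mu> w. w \<in> V \<and> w \<notin> U \<and> M *v w - \<mu> *s w \<in> U"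
proof (induction "degree p" arbitrary: p rule: less_induct)
  case less
  show ?case
  proof (cases "degree p = 0")
    case True
    then obtain c where p: "p = [:c:]" by (metis degree_eq_zeroE)
    with less have "c \<noteq> 0" by simp
    have "pv p M x = c *s x" using p by (simp add: pv_def)
    with less have "c *s x \<in> U" by simp
    then have "inverse c *s (c *s x) \<in> U" using U csub_scale by blast
    then have "x \<in> U" using \<open>c \<noteq> 0\<close> by (simp add: vector_smult_assoc)
    with x show ?thesis by simp
  next
    case False
    then have "\<not> constant (poly p)" by (simp add: constant_degree)
    then obtain r where "poly p r = 0" using fundamental_theorem_of_algebra by blast
    then have "[:-r, 1:] dvd p" by (simp add: poly_eq_0_iff_dvd)
    then obtain q where pq: "p = [:-r, 1:] * q" by (elim dvdE)
    with less have q0: "q \<noteq> 0" by auto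
    have "degree p = degree [:-r, 1:] + degree q" unfolding pq by (rule degree_mult_eq) (use q0 in auto)
    then have dq: "degree q < degree p" by simp
    show ?thesis
    proof (cases "pv q M x \<in> U")
      case True
      from less(1)[OF dq q0 True] show ?thesis .
    next
      case False
      have "pv q M x \<in> V" using pv_in[OF V MV x(1)] by blast
      moreover have "M *v pv q M x - r *s pv q M x \<in> U"
        using less(3) unfolding pq pv_linfactor .
      ultimately show ?thesis using False by blast
    qed
  qed
qed

lemma pv_dep: fixes M :: "complex^'n^'n" shows "\<exists>p. p \<noteq> 0 \<and> pv p M x = 0"
proof -
  define D where "D = DIM(complex^'n)"
  show ?thesis
  proof (cases "inj_on (\<lambda>k. iter M k x) {..D}")
    case False
    then obtain a b where ab: "a \<le> D" "b \<le> D" "a \<noteq> b" "iter M a x = iter M b x"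
      unfolding inj_on_def by auto
    define p where "p = monom (1::complex) a - monom 1 b"
    have "coeff p a = 1" using ab by (simp add: p_def)
    then have "p \<noteq> 0" by auto
    moreover have "pv p M x = 0"
    proof -
      show ?thesis using ab by (simp add: p_def pv_diff pv_monom)
    qed
    ultimately show ?thesis by blast
  next
    case True
    define S where "S = (\<lambda>k. iter M k x) ` {..D}"
    have cS: "card S = Suc D" using True by (simp add: S_def card_image)
    have "\<not> independent S"
    proof
      assume "independent S"
      then have "card S \<le> D" using independent_bound[of S] unfolding D_def by simp
      with cS show False by simp
    qed
    moreover have "finite S" by (simp add: S_def)
    ultimately obtain c where c: "(\<Sum>v\<in>S. c v *\<^sub>R v) = 0" "\<exists>v\<in>S. c v \<noteq> 0"
      using independent_explicit by blast
    define p where "p = (\<Sum>k\<le>D. monom (complex_of_real (c (iter M k x))) k)"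
    have cp: "coeff p j = (if j \<le> D then complex_of_real (c (iter M j x)) else 0)" for j
      by (simp add: p_def coeff_sum)
    have dp: "degree p \<le> D" by (rule degree_le) (simp add: cp)
    from c(2) obtain k where k: "k \<le> D" "c (iter M k x) \<noteq> 0" by (auto simp: S_def)
    then have "coeff p k \<noteq> 0" by (simp add: cp)
    then have "p \<noteq> 0" by auto
    moreover have "pv p M x = 0"
    proof -
      have "pv p M x = (\<Sum>k\<le>D. complex_of_real (c (iter M k x)) *s iter M k x)"
        by (simp add: pv_bound[OF dp] cp)
      also have "\<dots> = (\<Sum>k\<le>D. c (iter M k x) *\<^sub>R iter M k x)"
        by (simp only: scaleR_as_smult)
      also have "\<dots> = (\<Sum>v\<in>S. c v *\<^sub>R v)"
        unfolding S_def by (simp add: sum.reindex[OF True])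
      finally show ?thesis using c(1) by simp
    qed
    ultimately show ?thesis by blast
  qed
qed

lemma eig_mod:
  assumes U: "csub U" and V: "csub V" and UV: "U \<subset> V"
    and MV: "\<And>v. v \<in> V \<Longrightarrow> M *v v \<in> V"
  shows "\<exists>\<mu> w. w \<in> V \<and> w \<notin> U \<and> M *v w - \<mu> *s w \<in> U"
proof -
  obtain x where x: "x \<in> V" "x \<notin> U" using UV by blast
  obtain p where "p \<noteq> 0" "pv p M x = 0" using pv_dep by blast
  then show ?thesis
    using eig_desc[OF U V _ MV x] UV csub_0[OF U] by auto
qed


lemma commute_apply:
  assumes "M ** N = N ** M"
  shows "M *v (N *v v) = N *v (M *v v)"
  by (simp add: matrix_vector_mul_assoc assms)

lemma common_eig:
  fixes A :: "'i \<Rightarrow> complex^'n^'n"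
  assumes comm: "\<forall>i\<in>I. \<forall>j\<in>I. A i ** A j = A j ** A i"
  shows "csub U \<Longrightarrow> csub V \<Longrightarrow> U \<subset> V \<Longrightarrow> (\<forall>i\<in>I. \<forall>v\<in>V. A i *v v \<in> V)
    \<Longrightarrow> (\<forall>i\<in>I. \<forall>v\<in>U. A i *v v \<in> U)
    \<Longrightarrow> \<exists>w. w \<in> V \<and> w \<notin> U \<and> (\<forall>i\<in>I. \<exists>\<mu>. A i *v w - \<mu> *s w \<in> U)"
proof (induction "dim V" arbitrary: V rule: less_induct)
  case less
  note U = less(2) and V = less(3) and UV = less(4) and invV = less(5) and invU = less(6)
  show ?case
  proof (cases "\<forall>i\<in>I. \<exists>\<mu>. \<forall>v\<in>V. A i *v v - \<mu> *s v \<in> U")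
    case True
    obtain w where "w \<in> V" "w \<notin> U" using UV by blast
    then show ?thesis using True by blast
  next
    case False
    then obtain i0 where i0: "i0 \<in> I" and nsc: "\<And>\<mu>. \<exists>v\<in>V. A i0 *v v - \<mu> *s v \<notin> U"
      by blast
    define M where "M = A i0"
    obtain \<mu> w0 where w0: "w0 \<in> V" "w0 \<notin> U" "M *v w0 - \<mu> *s w0 \<in> U"
      using eig_mod[OF U V UV, of M] invV i0 unfolding M_def by blast
    define V' where "V' = {v \<in> V. M *v v - \<mu> *s v \<in> U}"
    have cV': "csub V'"
      unfolding csub_def
    proof (intro conjI ballI allI impI)
      show "0 \<in> V'" using V U by (simp add: V'_def csub_0)
    next
      fix x y assume "x \<in> V'" "y \<in> V'"
      then have "x + y \<in> V" "(M *v x - \<mu> *s x) + (M *v y - \<mu> *s y) \<in> U"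
        using V U by (auto simp: V'_def csub_add)
      moreover have "M *v (x + y) - \<mu> *s (x + y) = (M *v x - \<mu> *s x) + (M *v y - \<mu> *s y)"
        by (simp add: matrix_vector_right_distrib vector_add_ldistrib algebra_simps)
      ultimately show "x + y \<in> V'" unfolding V'_def by (metis (no_types, lifting) mem_Collect_eq)
    next
      fix c x assume "x \<in> V'"
      then have "c *s x \<in> V" "c *s (M *v x - \<mu> *s x) \<in> U"
        using V U csub_scale unfolding V'_def by blast+
      moreover have "M *v (c *s x) - \<mu> *s (c *s x) = c *s (M *v x - \<mu> *s x)"
        by (simp add: matvec_scale vector_ssub_ldistrib vector_smult_assoc mult.commute)
      ultimately show "c *s x \<in> V'" unfolding V'_def by (metis (no_types, lifting) mem_Collect_eq)
    qed
    have UV': "U \<subset> V'"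
    proof -
      have "U \<subseteq> V'"
      proof
        fix v assume "v \<in> U"
        then have "v \<in> V" "M *v v \<in> U" "\<mu> *s v \<in> U"
          using UV invU i0 U csub_scale unfolding M_def by blast+
        then show "v \<in> V'" using U csub_diff by (auto simp: V'_def)
      qed
      moreover have "w0 \<in> V'" using w0 by (simp add: V'_def)
      ultimately show ?thesis using w0 by blast
    qed
    have V'V: "V' \<subset> V"
    proof -
      obtain v where "v \<in> V" "A i0 *v v - \<mu> *s v \<notin> U" using nsc by blast
      then show ?thesis by (auto simp: V'_def M_def)
    qed
    have "dim V' < dim V"
    proof (rule dim_psubset)
      show "span V' \<subset> span V"
        using V'V csub_subspace[OF cV'] csub_subspace[OF V] by (metis span_eq_iff)
    qed
    moreover have "\<forall>i\<in>I. \<forall>v\<in>V'. A i *v v \<in> V'"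
    proof (intro ballI)
      fix i v assume i: "i \<in> I" and v: "v \<in> V'"
      then have "v \<in> V" "M *v v - \<mu> *s v \<in> U" by (auto simp: V'_def)
      then have "A i *v v \<in> V" "A i *v (M *v v - \<mu> *s v) \<in> U" using invV invU i by auto
      moreover have "A i *v (M *v v - \<mu> *s v) = M *v (A i *v v) - \<mu> *s (A i *v v)"
        using comm i i0 by (simp add: M_def matrix_vector_mult_diff_distrib matvec_scale commute_apply)
      ultimately show "A i *v v \<in> V'" unfolding V'_def by (metis (no_types, lifting) mem_Collect_eq)
    qed
    ultimately show ?thesis
      using less(1)[OF _ U cV' UV'] invU V'V by blast
  qed
qed


definition cspan :: "(nat \<Rightarrow> complex^'n) \<Rightarrow> nat \<Rightarrow> (complex^'n) set" where
  "cspan u m = {y. \<exists>c. y = (\<Sum>k<m. c k *s u k)}"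

definition ortho :: "(nat \<Rightarrow> complex^'n) \<Rightarrow> nat \<Rightarrow> bool" where
  "ortho u m \<longleftrightarrow> (\<forall>j<m. \<forall>k<m. cinner (u j) (u k) = (if j = k then 1 else 0))"

lemma mem_cspan: "y \<in> cspan u m \<longleftrightarrow> (\<exists>c. y = (\<Sum>k<m. c k *s u k))"
  by (simp add: cspan_def)

lemma csub_cspan: fixes u :: "nat \<Rightarrow> complex^'n" shows "csub (cspan u m)"
  unfolding csub_def
proof (intro conjI ballI allI impI)
  show "0 \<in> cspan u m" unfolding mem_cspan by (rule exI[of _ "\<lambda>_. 0"]) simp
next
  fix x y :: "complex^'n"
  assume "x \<in> cspan u m" "y \<in> cspan u m"
  then obtain c d where "x = (\<Sum>k<m. c k *s u k)" "y = (\<Sum>k<m. d k *s u k)" by (auto simp: mem_cspan)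
  then show "x + y \<in> cspan u m" unfolding mem_cspan
    by (intro exI[of _ "\<lambda>k. c k + d k"]) (simp add: sum.distrib vector_sadd_rdistrib)
next
  fix a x assume "(x::complex^'n) \<in> cspan u m"
  then obtain c where "x = (\<Sum>k<m. c k *s u k)" by (auto simp: mem_cspan)
  then show "a *s x \<in> cspan u m" unfolding mem_cspan
    by (intro exI[of _ "\<lambda>k. a * c k"]) (simp add: sum_cmul[symmetric] vector_smult_assoc)
qed

lemma cspan_0: "cspan u 0 = {0}"
  by (auto simp: cspan_def)

lemma cspan_Suc_iff: "y \<in> cspan u (Suc m) \<longleftrightarrow> (\<exists>z a. z \<in> cspan u m \<and> y = z + a *s u m)"
proof
  assume "y \<in> cspan u (Suc m)"
  then obtain c where "y = (\<Sum>k<Suc m. c k *s u k)" by (auto simp: mem_cspan)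
  then have "y = (\<Sum>k<m. c k *s u k) + c m *s u m" by simp
  then show "\<exists>z a. z \<in> cspan u m \<and> y = z + a *s u m" by (auto simp: mem_cspan)
next
  assume "\<exists>z a. z \<in> cspan u m \<and> y = z + a *s u m"
  then obtain c a where y: "y = (\<Sum>k<m. c k *s u k) + a *s u m" by (auto simp: mem_cspan)
  define d where "d = c(m := a)"
  have "(\<Sum>k<m. c k *s u k) = (\<Sum>k<m. d k *s u k)" by (rule sum.cong) (auto simp: d_def)
  then have "y = (\<Sum>k<Suc m. d k *s u k)" using y by (simp add: d_def)
  then show "y \<in> cspan u (Suc m)" by (auto simp: mem_cspan)
qed

lemma cspan_mono_Suc: "y \<in> cspan u m \<Longrightarrow> y \<in> cspan u (Suc m)"
  using cspan_Suc_iff[of y u m] by (metis add.right_neutral vector_smult_lzero)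

lemma cspan_mono: "k \<le> m \<Longrightarrow> y \<in> cspan u k \<Longrightarrow> y \<in> cspan u m"
  by (induction m) (auto simp: cspan_mono_Suc le_Suc_eq)

lemma u_in_cspan: "u m \<in> cspan u (Suc m)"
  using cspan_Suc_iff[of "u m" u m] csub_0[OF csub_cspan] by (metis add_0 vector_smult_lid)

lemma cspan_cong: "(\<And>k. k < m \<Longrightarrow> u k = u' k) \<Longrightarrow> cspan u m = cspan u' m"
proof -
  assume h: "\<And>k. k < m \<Longrightarrow> u k = u' k"
  have "\<And>c. (\<Sum>k<m. c k *s u k) = (\<Sum>k<m. c k *s u' k)"
    by (rule sum.cong) (auto simp: h)
  then show ?thesis unfolding cspan_def by simp
qed

lemma ortho_mono: "ortho u m \<Longrightarrow> k \<le> m \<Longrightarrow> ortho u k"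
  by (auto simp: ortho_def)

lemma ortho_coeff:
  assumes "ortho u m" "j < m"
  shows "cinner (u j) (\<Sum>k<m. c k *s u k) = c j"
proof -
  have "cinner (u j) (\<Sum>k<m. c k *s u k) = (\<Sum>k<m. c k * cinner (u j) (u k))"
    by (simp add: cinner_sum_right cinner_scale_right)
  also have "\<dots> = (\<Sum>k<m. if k = j then c j else 0)"
    by (rule sum.cong) (use assms in \<open>auto simp: ortho_def\<close>)
  also have "\<dots> = c j" using assms by simp
  finally show ?thesis .
qed

lemma ortho_perp:
  assumes "ortho u M" "m \<le> j" "j < M" "y \<in> cspan u m"
  shows "cinner (u j) y = 0"
proof -
  obtain c where y: "y = (\<Sum>k<m. c k *s u k)" using assms(4) by (auto simp: mem_cspan)
  have "cinner (u j) y = (\<Sum>k<m. c k * cinner (u j) (u k))"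
    by (simp add: y cinner_sum_right cinner_scale_right)
  also have "\<dots> = 0"
    by (rule sum.neutral) (use assms in \<open>auto simp: ortho_def\<close>)
  finally show ?thesis .
qed

lemma cspan_expand:
  assumes "ortho u m" "y \<in> cspan u m"
  shows "y = (\<Sum>k<m. cinner (u k) y *s u k)"
proof -
  obtain c where y: "y = (\<Sum>k<m. c k *s u k)" using assms(2) by (auto simp: mem_cspan)
  have "(\<Sum>k<m. cinner (u k) y *s u k) = (\<Sum>k<m. c k *s u k)"
    by (rule sum.cong) (use assms(1) in \<open>auto simp: y ortho_coeff\<close>)
  then show ?thesis using y by simp
qed

lemma cspan_Suc_perp:
  assumes "ortho u (Suc m)" "z \<in> cspan u (Suc m)" "cinner (u m) z = 0"
  shows "z \<in> cspan u m"
proof -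
  obtain y a where za: "y \<in> cspan u m" "z = y + a *s u m" using assms(2) cspan_Suc_iff by blast
  have "cinner (u m) y = 0" using ortho_perp[OF assms(1) _ _ za(1)] by simp
  moreover have "cinner (u m) (u m) = 1" using assms(1) by (simp add: ortho_def)
  ultimately have "a = 0" using assms(3) za(2) by (simp add: cinner_add_right cinner_scale_right)
  then show ?thesis using za by simp
qed

definition lam :: "('i \<Rightarrow> complex^'n^'n) \<Rightarrow> (nat \<Rightarrow> complex^'n) \<Rightarrow> nat \<Rightarrow> 'i \<Rightarrow> complex" where
  "lam A u k i = cinner (u k) (A i *v u k)"

definition good :: "('i \<Rightarrow> complex^'n^'n) \<Rightarrow> 'i set \<Rightarrow> nat \<Rightarrow> (nat \<Rightarrow> complex^'n) \<Rightarrow> bool" where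
  "good A I m u \<longleftrightarrow> ortho u m \<and>
     (\<forall>k<m. \<forall>i\<in>I. A i *v u k - lam A u k i *s u k \<in> cspan u k) \<and>
     (\<forall>k<m. \<exists>v. v \<noteq> 0 \<and> (\<forall>i\<in>I. A i *v v = lam A u k i *s v))"

lemma good_mono: "good A I m u \<Longrightarrow> k \<le> m \<Longrightarrow> good A I k u"
  by (auto simp: good_def ortho_def)

lemma good_inv:
  assumes "good A I m u" "k \<le> m" "i \<in> I"
  shows "y \<in> cspan u k \<Longrightarrow> A i *v y \<in> cspan u k"
  using assms(2)
proof (induction k arbitrary: y)
  case 0
  then show ?case by (simp add: cspan_0)
next
  case (Suc k)
  then obtain z a where za: "z \<in> cspan u k" "y = z + a *s u k" using cspan_Suc_iff by blast
  have "A i *v z \<in> cspan u k" using Suc za by simp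
  then have 1: "A i *v z \<in> cspan u (Suc k)" by (rule cspan_mono_Suc)
  have t: "A i *v u k - lam A u k i *s u k \<in> cspan u k"
    using assms Suc(3) by (auto simp: good_def)
  have "A i *v u k = (A i *v u k - lam A u k i *s u k) + lam A u k i *s u k" by simp
  then have 2: "A i *v u k \<in> cspan u (Suc k)" using t cspan_Suc_iff by blast
  have "A i *v y = A i *v z + a *s (A i *v u k)"
    by (simp add: za matrix_vector_right_distrib matvec_scale)
  then show ?case using 1 2 csub_cspan csub_add csub_scale by metis
qed

lemma comm_cocycle:
  fixes M N :: "complex^'n^'n"
  assumes "M ** N = N ** M"
  shows "M *v (N *v w - b *s w) - a *s (N *v w - b *s w)
       = N *v (M *v w - a *s w) - b *s (M *v w - a *s w)"
proof -
  have c: "M *v (N *v w) = N *v (M *v w)" using assms by (rule commute_apply)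
  show ?thesis
    by (simp add: matrix_vector_mult_diff_distrib matvec_scale c vec_eq_iff algebra_simps)
qed


lemma lift_eig:
  fixes A :: "'i \<Rightarrow> complex^'n^'n"
  assumes comm: "\<forall>i\<in>I. \<forall>j\<in>I. A i ** A j = A j ** A i"
  shows "good A I m u \<Longrightarrow> (\<forall>i\<in>I. A i *v w - \<mu> i *s w \<in> cspan u m) \<Longrightarrow> w \<notin> cspan u m
    \<Longrightarrow> \<exists>v. v \<noteq> 0 \<and> (\<forall>i\<in>I. A i *v v = \<mu> i *s v)"
proof (induction m arbitrary: w)
  case 0
  then have "w \<noteq> 0" "\<forall>i\<in>I. A i *v w = \<mu> i *s w" by (auto simp: cspan_0)
  then show ?case by blast
next
  case (Suc m)
  note g = Suc.prems(1) and hw = Suc.prems(2) and wn = Suc.prems(3)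
  have gm: "good A I m u" using g good_mono by (metis le_SucI order_refl)
  have orth: "ortho u (Suc m)" using g by (simp add: good_def)
  have umm: "cinner (u m) (u m) = 1" using orth by (simp add: ortho_def)
  define l where "l i = lam A u m i" for i
  have tri: "A i *v u m - l i *s u m \<in> cspan u m" if "i \<in> I" for i
    using g that by (auto simp: good_def l_def)
  have l_eq: "cinner (u m) (A i *v u m) = l i" for i by (simp add: l_def lam_def)
  show ?case
  proof (cases "\<forall>i\<in>I. \<mu> i = l i")
    case True
    from g obtain v where "v \<noteq> 0" "\<forall>i\<in>I. A i *v v = lam A u m i *s v"
      by (auto simp: good_def)
    then show ?thesis using True by (auto simp: l_def)
  next
    case False
    then obtain j where j: "j \<in> I" "\<mu> j \<noteq> l j" by blast
    define y where "y i = A i *v w - \<mu> i *s w" for i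
    define s where "s i = cinner (u m) (y i)" for i
    have yS: "y i \<in> cspan u (Suc m)" if "i \<in> I" for i using hw that by (simp add: y_def)
    have umS: "A i *v u m - \<mu> i *s u m \<in> cspan u (Suc m)" if "i \<in> I" for i
    proof -
      have "A i *v u m - \<mu> i *s u m = (A i *v u m - l i *s u m) + (l i - \<mu> i) *s u m"
        by (simp add: vector_sub_rdistrib)
      then show ?thesis
        using tri[OF that] u_in_cspan[of u m] csub_cspan cspan_mono_Suc csub_add csub_scale
        by metis
    qed
    have um_in: "cinner (u m) (A i *v u m - \<mu> i *s u m) = l i - \<mu> i" for i
      by (simp add: cinner_diff_right cinner_scale_right l_eq umm)
    have gen: "cinner (u m) (A i *v y k - \<mu> i *s y k) = s k * (l i - \<mu> i)"
      if "i \<in> I" "k \<in> I" for i k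
    proof -
      define z where "z = y k - s k *s u m"
      have "z \<in> cspan u (Suc m)"
        unfolding z_def using yS[OF that(2)] u_in_cspan[of u m] csub_cspan csub_diff csub_scale by metis
      moreover have "cinner (u m) z = 0"
        by (simp add: z_def cinner_diff_right cinner_scale_right umm s_def)
      ultimately have zm: "z \<in> cspan u m" using cspan_Suc_perp[OF orth] by blast
      have "A i *v z \<in> cspan u m" using good_inv[OF g _ that(1) zm] by simp
      then have "A i *v z - \<mu> i *s z \<in> cspan u m"
        using zm csub_cspan csub_diff csub_scale by metis
      then have c0: "cinner (u m) (A i *v z - \<mu> i *s z) = 0"
        using ortho_perp[OF orth, of m m] by simp
      have "A i *v y k - \<mu> i *s y k = (A i *v z - \<mu> i *s z) + s k *s (A i *v u m - \<mu> i *s u m)"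
        by (simp add: z_def matrix_vector_mult_diff_distrib matvec_scale vec_eq_iff algebra_simps)
      then have "cinner (u m) (A i *v y k - \<mu> i *s y k) = cinner (u m) (A i *v z - \<mu> i *s z) + s k * cinner (u m) (A i *v u m - \<mu> i *s u m)"
        by (simp only: cinner_add_right cinner_scale_right)
      then show ?thesis using c0 um_in by simp
    qed
    have key: "s i * (l j - \<mu> j) = s j * (l i - \<mu> i)" if "i \<in> I" for i
    proof -
      have "A i *v y j - \<mu> i *s y j = A j *v y i - \<mu> j *s y i"
        unfolding y_def using comm that j(1) by (intro comm_cocycle) blast
      then show ?thesis using gen[OF that j(1)] gen[OF j(1) that] by simp
    qed
    define t where "t = - s j / (l j - \<mu> j)"
    define w' where "w' = w + t *s u m"
    have nz: "l j - \<mu> j \<noteq> 0" using j by simp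
    have w'in: "A i *v w' - \<mu> i *s w' \<in> cspan u m" if "i \<in> I" for i
    proof -
      have e: "A i *v w' - \<mu> i *s w' = y i + t *s (A i *v u m - \<mu> i *s u m)"
        by (simp add: w'_def y_def matrix_vector_right_distrib matvec_scale vec_eq_iff algebra_simps)
      have "y i + t *s (A i *v u m - \<mu> i *s u m) \<in> cspan u (Suc m)"
        using yS[OF that] umS[OF that] csub_cspan csub_add csub_scale by metis
      moreover have "cinner (u m) (y i + t *s (A i *v u m - \<mu> i *s u m)) = 0"
      proof -
        have "cinner (u m) (y i + t *s (A i *v u m - \<mu> i *s u m)) = s i + t * cinner (u m) (A i *v u m - \<mu> i *s u m)"
          by (simp only: cinner_add_right cinner_scale_right s_def)
        also have "\<dots> = s i + t * (l i - \<mu> i)" by (simp only: um_in)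
        also have "\<dots> = 0"
          using key[OF that] nz by (simp add: t_def field_simps)
        finally show ?thesis .
      qed
      ultimately show ?thesis using e cspan_Suc_perp[OF orth] by simp
    qed
    have w'n: "w' \<notin> cspan u m"
    proof
      assume "w' \<in> cspan u m"
      then have "w' \<in> cspan u (Suc m)" by (rule cspan_mono_Suc)
      moreover have "w = w' - t *s u m" by (simp add: w'_def)
      ultimately have "w \<in> cspan u (Suc m)"
        using u_in_cspan[of u m] csub_cspan csub_diff csub_scale by metis
      with wn show False by simp
    qed
    show ?thesis using Suc.IH[OF gm _ w'n] w'in by blast
  qed
qed


lemma perp_cspan:
  assumes "\<forall>j<m. cinner x (u j) = 0" "z \<in> cspan u m"
  shows "cinner x z = 0"
proof -
  obtain c where z: "z = (\<Sum>k<m. c k *s u k)" using assms(2) by (auto simp: mem_cspan)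
  show ?thesis using assms(1) by (simp add: z cinner_sum_right cinner_scale_right)
qed

lemma extend_good:
  fixes A :: "'i \<Rightarrow> complex^'n^'n"
  assumes comm: "\<forall>i\<in>I. \<forall>j\<in>I. A i ** A j = A j ** A i"
    and g: "good A I m u" and y: "y \<notin> cspan u m"
  shows "\<exists>u'. good A I (Suc m) (u(m := u'))"
proof -
  define U where "U = cspan u m"
  have cU: "csub U" by (simp add: U_def csub_cspan)
  have orth: "ortho u m" using g by (simp add: good_def)
  have invU: "\<forall>i\<in>I. \<forall>v\<in>U. A i *v v \<in> U" using good_inv[OF g order_refl] by (simp add: U_def)
  have "U \<subset> UNIV" using y by (auto simp: U_def)
  from common_eig[OF comm cU csub_UNIV this _ invU]
  obtain w where w: "w \<notin> U" "\<forall>i\<in>I. \<exists>\<mu>. A i *v w - \<mu> *s w \<in> U" by auto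
  then obtain \<mu> where mu: "\<forall>i\<in>I. A i *v w - \<mu> i *s w \<in> U" by metis
  define p where "p = (\<Sum>k<m. cinner (u k) w *s u k)"
  have pU: "p \<in> U" unfolding U_def mem_cspan p_def by (rule exI[of _ "\<lambda>k. cinner (u k) w"]) (rule refl)
  define w1 where "w1 = w - p"
  have w1n: "w1 \<notin> U"
  proof
    assume "w1 \<in> U"
    then have "w1 + p \<in> U" using pU cU csub_add by blast
    then show False using w by (simp add: w1_def)
  qed
  have w1perp: "cinner (u j) w1 = 0" if "j < m" for j
    using ortho_coeff[OF orth that, of "\<lambda>k. cinner (u k) w"]
    by (simp add: w1_def p_def cinner_diff_right)
  have w1inv: "A i *v w1 - \<mu> i *s w1 \<in> U" if "i \<in> I" for i
  proof -
    have "A i *v w1 - \<mu> i *s w1 = (A i *v w - \<mu> i *s w) - (A i *v p - \<mu> i *s p)"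
      by (simp add: w1_def matrix_vector_mult_diff_distrib vector_ssub_ldistrib)
    moreover have "A i *v p \<in> U" using invU pU that by blast
    then have "A i *v p - \<mu> i *s p \<in> U" using pU cU csub_diff csub_scale by blast
    ultimately show ?thesis using mu that cU csub_diff by metis
  qed
  have w10: "w1 \<noteq> 0" using w1n cU csub_0 by blast
  define r where "r = nsq w1"
  have r0: "r > 0" using w10 nsq_nonneg[of w1] nsq_eq_0[of w1] by (simp add: r_def)
  define a where "a = complex_of_real (1 / sqrt r)"
  define u' where "u' = a *s w1"
  have a0: "a \<noteq> 0" using r0 by (simp add: a_def)
  have u'u': "cinner u' u' = 1"
  proof -
    have "cinner u' u' = cnj a * a * cinner w1 w1"
      by (simp add: u'_def cinner_scale_left cinner_scale_right)
    also have "\<dots> = complex_of_real ((1 / sqrt r) * (1 / sqrt r) * r)"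
      unfolding a_def cinner_self r_def by (simp only: complex_cnj_complex_of_real of_real_mult)
    also have "\<dots> = 1"
    proof -
      have "sqrt r * sqrt r = r" using r0 by simp
      then have "(1 / sqrt r) * (1 / sqrt r) * r = 1" using r0 by (simp add: field_simps)
      then show ?thesis by (metis of_real_1)
    qed
    finally show ?thesis .
  qed
  have u'perp: "cinner (u j) u' = 0" if "j < m" for j
    using w1perp[OF that] by (simp add: u'_def cinner_scale_right)
  have u'perp2: "cinner u' (u j) = 0" if "j < m" for j
    using u'perp[OF that] cinner_cnj[of "u j" u'] by simp
  have u'inv: "A i *v u' - \<mu> i *s u' \<in> U" if "i \<in> I" for i
  proof -
    have "A i *v u' - \<mu> i *s u' = a *s (A i *v w1 - \<mu> i *s w1)"
      by (simp add: u'_def matvec_scale vector_ssub_ldistrib vector_smult_assoc mult.commute)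
    then show ?thesis using w1inv[OF that] cU csub_scale by metis
  qed
  have u'n: "u' \<notin> U"
  proof
    assume "u' \<in> U"
    then have "cinner u' u' = 0" using perp_cspan[of m u' u] u'perp2 by (simp add: U_def)
    with u'u' show False by simp
  qed
  define u2 where "u2 = u(m := u')"
  have cs: "cspan u2 k = cspan u k" if "k \<le> m" for k
    by (rule cspan_cong) (use that in \<open>auto simp: u2_def\<close>)
  have lamk: "lam A u2 k i = lam A u k i" if "k < m" for k i
    using that by (simp add: lam_def u2_def)
  have lamm: "lam A u2 m i = \<mu> i" if "i \<in> I" for i
  proof -
    have "A i *v u' = (A i *v u' - \<mu> i *s u') + \<mu> i *s u'" by simp
    then have "cinner u' (A i *v u') = cinner u' (A i *v u' - \<mu> i *s u') + \<mu> i * cinner u' u'"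
      by (metis cinner_add_right cinner_scale_right)
    also have "cinner u' (A i *v u' - \<mu> i *s u') = 0"
      using perp_cspan[of m u' u] u'perp2 u'inv[OF that] by (simp add: U_def)
    finally show ?thesis by (simp add: lam_def u2_def u'u')
  qed
  have "good A I (Suc m) u2"
    unfolding good_def
  proof (intro conjI allI impI ballI)
    show "ortho u2 (Suc m)"
      unfolding ortho_def
    proof (intro allI impI)
      fix j k assume "j < Suc m" "k < Suc m"
      then show "cinner (u2 j) (u2 k) = (if j = k then 1 else 0)"
        using orth u'u' u'perp u'perp2
        by (cases "j = m"; cases "k = m") (auto simp: u2_def ortho_def)
    qed
  next
    fix k i assume k: "k < Suc m" and i: "i \<in> I"
    show "A i *v u2 k - lam A u2 k i *s u2 k \<in> cspan u2 k"
    proof (cases "k = m")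
      case True
      then show ?thesis using u'inv[OF i] cs[of m] lamm[OF i] by (simp add: u2_def U_def)
    next
      case False
      then have "k < m" using k by simp
      then show ?thesis using g i cs[of k] lamk[of k i] by (auto simp: good_def u2_def)
    qed
  next
    fix k assume k: "k < Suc m"
    show "\<exists>v. v \<noteq> 0 \<and> (\<forall>i\<in>I. A i *v v = lam A u2 k i *s v)"
    proof (cases "k = m")
      case True
      obtain v where "v \<noteq> 0" "\<forall>i\<in>I. A i *v v = \<mu> i *s v"
        using lift_eig[OF comm g, of u' \<mu>] u'inv u'n by (auto simp: U_def)
      then show ?thesis using True lamm by auto
    next
      case False
      then have "k < m" using k by simp
      then show ?thesis using g lamk[of k] by (auto simp: good_def)
    qed
  qed
  then show ?thesis unfolding u2_def by blast
qed

lemma bessel_eq: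
  assumes "ortho u m"
  shows "nsq (y - (\<Sum>k<m. cinner (u k) y *s u k)) = nsq y - (\<Sum>k<m. (cmod (cinner (u k) y))\<^sup>2)"
proof -
  define c where "c k = cinner (u k) y" for k
  define p where "p = (\<Sum>k<m. c k *s u k)"
  have sq: "cnj z * z = complex_of_real ((cmod z)\<^sup>2)" for z
    by (metis complex_norm_square mult.commute)
  have py: "cinner p y = (\<Sum>k<m. complex_of_real ((cmod (c k))\<^sup>2))"
    by (simp add: p_def cinner_sum_left cinner_scale_left c_def sq)
  have yp: "cinner y p = (\<Sum>k<m. complex_of_real ((cmod (c k))\<^sup>2))"
    using py cinner_cnj[of p y] by simp
  have pp: "cinner p p = (\<Sum>k<m. complex_of_real ((cmod (c k))\<^sup>2))"
  proof -
    have "cinner p p = (\<Sum>k<m. cnj (c k) * cinner (u k) p)"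
      by (simp add: p_def[of ] cinner_sum_left cinner_scale_left)
    also have "\<dots> = (\<Sum>k<m. cnj (c k) * c k)"
      by (rule sum.cong) (use assms in \<open>auto simp: p_def ortho_coeff\<close>)
    finally show ?thesis by (simp add: sq)
  qed
  have "cinner (y - p) (y - p) = cinner y y - (\<Sum>k<m. complex_of_real ((cmod (c k))\<^sup>2))"
    by (simp add: cinner_diff_left cinner_diff_right py yp pp)
  then have "complex_of_real (nsq (y - p)) = complex_of_real (nsq y - (\<Sum>k<m. (cmod (c k))\<^sup>2))"
    by (simp add: cinner_self)
  then show ?thesis by (simp only: of_real_eq_iff p_def c_def)
qed

lemma bessel_le:
  assumes "ortho u m"
  shows "(\<Sum>k<m. (cmod (cinner (u k) y))\<^sup>2) \<le> nsq y"
  using bessel_eq[OF assms, of y] nsq_nonneg[of "y - (\<Sum>k<m. cinner (u k) y *s u k)"] by simp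

lemma parseval:
  assumes "ortho u m" "y \<in> cspan u m"
  shows "(\<Sum>k<m. (cmod (cinner (u k) y))\<^sup>2) = nsq y"
  using bessel_eq[OF assms(1), of y] cspan_expand[OF assms] by (simp add: nsq_def)

lemma ortho_bound:
  fixes u :: "nat \<Rightarrow> complex^'n"
  assumes "ortho u m"
  shows "m \<le> CARD('n)"
proof -
  have ax: "cinner (u k) (axis j 1) = cnj (u k $ j)" for k j
    by (simp add: cinner_def axis_def if_distrib cong: if_cong)
  have nax: "nsq (axis j 1 :: complex^'n) = 1" for j
  proof -
    have "(cmod ((axis j 1::complex^'n) $ k))\<^sup>2 = (if k = j then 1 else 0)" for k
      by (simp add: axis_def)
    then show ?thesis by (simp add: nsq_def)
  qed
  have nu: "nsq (u k) = 1" if "k < m" for k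
  proof -
    have "complex_of_real (nsq (u k)) = 1" using assms that by (simp add: cinner_self[symmetric] ortho_def)
    then show ?thesis by (simp only: of_real_eq_1_iff)
  qed
  have "real m = (\<Sum>k<m. nsq (u k))" using nu by simp
  also have "\<dots> = (\<Sum>j\<in>UNIV. \<Sum>k<m. (cmod (cinner (u k) (axis j 1)))\<^sup>2)"
    by (simp add: nsq_def ax sum.swap[of _ "{..<m}"])
  also have "\<dots> \<le> (\<Sum>j\<in>(UNIV::'n set). nsq (axis j 1 :: complex^'n))"
    by (rule sum_mono) (rule bessel_le[OF assms])
  also have "\<dots> = real CARD('n)" by (simp add: nax)
  finally show ?thesis by simp
qed

lemma exists_complete:
  fixes A :: "'i \<Rightarrow> complex^'n^'n"
  assumes comm: "\<forall>i\<in>I. \<forall>j\<in>I. A i ** A j = A j ** A i"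
  shows "\<exists>m u. good A I m u \<and> m \<le> CARD('n) \<and> (\<forall>y. y \<in> cspan u m)"
proof -
  define S where "S = {m. \<exists>u. good A I m (u :: nat \<Rightarrow> complex^'n)}"
  have Sb: "S \<subseteq> {..CARD('n)}" using ortho_bound by (auto simp: S_def good_def)
  then have fS: "finite S" by (rule finite_subset) simp
  have "0 \<in> S" by (auto simp: S_def good_def ortho_def)
  then have mS: "Max S \<in> S" using fS by (intro Max_in) auto
  then obtain u :: "nat \<Rightarrow> complex^'n" where g: "good A I (Max S) u" by (auto simp: S_def)
  have "\<forall>y. y \<in> cspan u (Max S)"
  proof (rule ccontr)
    assume "\<not> (\<forall>y. y \<in> cspan u (Max S))"
    then obtain y where "y \<notin> cspan u (Max S)" by blast
    from extend_good[OF comm g this] have "Suc (Max S) \<in> S" by (auto simp: S_def)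
    then have "Suc (Max S) \<le> Max S" using fS by (rule Max_ge[rotated])
    then show False by simp
  qed
  moreover have "Max S \<le> CARD('n)" using mS Sb by auto
  ultimately show ?thesis using g by blast
qed


definition Dm :: "(nat \<Rightarrow> complex^'n) \<Rightarrow> nat \<Rightarrow> (nat \<Rightarrow> complex) \<Rightarrow> complex^'n^'n" where
  "Dm u m f = (\<chi> a b. \<Sum>k<m. f k * (u k $ a) * cnj (u k $ b))"

lemma Dm_apply: "Dm u m f *v y = (\<Sum>k<m. (f k * cinner (u k) y) *s u k)"
proof (unfold vec_eq_iff, intro allI)
  fix a
  have "(Dm u m f *v y) $ a = (\<Sum>b\<in>UNIV. \<Sum>k<m. f k * (u k $ a) * (cnj (u k $ b) * y $ b))"
    by (simp add: Dm_def matrix_vector_mult_def sum_distrib_right sum_distrib_left mult_ac)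
  also have "\<dots> = (\<Sum>k<m. \<Sum>b\<in>UNIV. f k * (u k $ a) * (cnj (u k $ b) * y $ b))"
    by (rule sum.swap)
  also have "\<dots> = (\<Sum>k<m. (f k * cinner (u k) y) *s u k) $ a"
    by (simp add: cinner_def sum_distrib_left mult_ac)
  finally show "(Dm u m f *v y) $ a = (\<Sum>k<m. (f k * cinner (u k) y) *s u k) $ a" .
qed

lemma Dm_apply_u:
  assumes "ortho u m" "j < m"
  shows "Dm u m f *v u j = f j *s u j"
proof -
  have "Dm u m f *v u j = (\<Sum>k<m. (f k * cinner (u k) (u j)) *s u k)" by (rule Dm_apply)
  also have "\<dots> = (\<Sum>k<m. if k = j then f j *s u j else 0)"
    by (rule sum.cong) (use assms in \<open>auto simp: ortho_def\<close>)
  also have "\<dots> = f j *s u j" using assms by simp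
  finally show ?thesis .
qed

lemma Dm_mult:
  assumes "ortho u m"
  shows "Dm u m f ** Dm u m g = Dm u m (\<lambda>k. f k * g k)"
proof (unfold matrix_eq, intro allI)
  fix y
  have "(Dm u m f ** Dm u m g) *v y = Dm u m f *v (Dm u m g *v y)"
    by (simp add: matrix_vector_mul_assoc)
  also have "\<dots> = (\<Sum>k<m. (f k * cinner (u k) (\<Sum>l<m. (g l * cinner (u l) y) *s u l)) *s u k)"
    by (simp add: Dm_apply)
  also have "\<dots> = (\<Sum>k<m. ((f k * g k) * cinner (u k) y) *s u k)"
  proof (rule sum.cong)
    fix k assume "k \<in> {..<m}"
    then have "cinner (u k) (\<Sum>l<m. (g l * cinner (u l) y) *s u l) = g k * cinner (u k) y"
      using ortho_coeff[OF assms, of k "\<lambda>l. g l * cinner (u l) y"] by simp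
    then show "(f k * cinner (u k) (\<Sum>l<m. (g l * cinner (u l) y) *s u l)) *s u k =
       ((f k * g k) * cinner (u k) y) *s u k" by (simp add: mult_ac)
  qed simp
  also have "\<dots> = Dm u m (\<lambda>k. f k * g k) *v y" by (simp add: Dm_apply)
  finally show "(Dm u m f ** Dm u m g) *v y = Dm u m (\<lambda>k. f k * g k) *v y" .
qed

lemma Dm_adj: "adj (Dm u m f) = Dm u m (\<lambda>k. cnj (f k))"
  by (simp add: adj_def Dm_def vec_eq_iff mult_ac)

lemma Dm_normal:
  assumes "ortho u m"
  shows "normal_matrix (Dm u m f)"
  unfolding normal_matrix_def Dm_adj Dm_mult[OF assms] by (simp add: mult.commute)

lemma Dm_comm:
  assumes "ortho u m"
  shows "Dm u m f ** Dm u m g = Dm u m g ** Dm u m f"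
  unfolding Dm_mult[OF assms] by (simp add: mult.commute)

lemma hs_norm_sq: "(hs_norm X)\<^sup>2 = (\<Sum>j\<in>UNIV. \<Sum>k\<in>UNIV. (cmod (X $ j $ k))\<^sup>2)"
  unfolding hs_norm_def by (simp add: sum_nonneg)

lemma hs_basis:
  assumes "ortho u m" "\<forall>y. y \<in> cspan u m"
  shows "(hs_norm X)\<^sup>2 = (\<Sum>k<m. nsq (X *v u k))"
proof -
  define r where "r j = (\<chi> l. cnj (X $ j $ l))" for j
  have e: "(X *v u k) $ j = cnj (cinner (u k) (r j))" for k j
    by (simp add: r_def cinner_def matrix_vector_mult_def mult.commute)
  have "(\<Sum>k<m. nsq (X *v u k)) = (\<Sum>j\<in>UNIV. \<Sum>k<m. (cmod (cinner (u k) (r j)))\<^sup>2)"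
    by (simp add: nsq_def e sum.swap[of _ "{..<m}"])
  also have "\<dots> = (\<Sum>j\<in>UNIV. nsq (r j))"
    by (rule sum.cong) (use assms in \<open>auto intro: parseval\<close>)
  also have "\<dots> = (hs_norm X)\<^sup>2"
    by (simp add: hs_norm_sq nsq_def r_def)
  finally show ?thesis by simp
qed

lemma nsq_minus_proj:
  assumes "cinner x x = 1"
  shows "nsq (A *v x - cinner x (A *v x) *s x) = nsq (A *v x) - (cmod (cinner x (A *v x)))\<^sup>2"
proof -
  define y where "y = A *v x"
  define c where "c = cinner x y"
  have cy: "cinner y x = cnj c" by (simp add: c_def cinner_cnj)
  have "cinner (y - c *s x) (y - c *s x) = cinner y y - cnj c * c"
    by (simp add: cinner_diff_left cinner_diff_right cinner_scale_left cinner_scale_right assms cy c_def[symmetric] algebra_simps)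
  also have "\<dots> = complex_of_real (nsq y - (cmod c)\<^sup>2)"
  proof -
    have "cnj c * c = complex_of_real ((cmod c)\<^sup>2)" by (metis complex_norm_square mult.commute)
    then show ?thesis by (simp only: cinner_self of_real_diff)
  qed
  finally have "complex_of_real (nsq (y - c *s x)) = complex_of_real (nsq y - (cmod c)\<^sup>2)"
    by (simp add: cinner_self)
  then show ?thesis by (simp only: of_real_eq_iff y_def c_def)
qed

lemma nsq_scale: "nsq (c *s x) = (cmod c)\<^sup>2 * nsq x"
  by (simp add: nsq_def norm_mult power_mult_distrib sum_distrib_left)

lemma nsq_AA: "nsq (A *v x) = Re (cinner x ((adj A ** A) *v x))"
  by (simp add: matrix_vector_mul_assoc[symmetric] cinner_adj cinner_self)

definition Qr :: "complex^'n \<Rightarrow> complex^'n^'n \<Rightarrow> real" where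
  "Qr x X = Re (cinner x (X *v x))"

lemma Qr_add: "Qr x (X + Y) = Qr x X + Qr x Y"
  by (simp add: Qr_def matrix_vector_mult_add_rdistrib cinner_add_right)

lemma matvec_scaleR: "(c *\<^sub>R X) *v (x::complex^'n) = complex_of_real c *s (X *v x)"
proof -
  have e: "(c *\<^sub>R X) $ i $ j = complex_of_real c * X $ i $ j" for i j
    by (subst vector_scaleR_component)+ (rule scaleR_conv_of_real)
  show ?thesis
    unfolding matrix_vector_mult_def vector_scalar_mult_def e
    by (simp add: sum_distrib_left mult.assoc)
qed

lemma Qr_scaleR: "Qr x (c *\<^sub>R X) = c * Qr x X"
  by (simp add: Qr_def matvec_scaleR cinner_scale_right)

lemma unit_axis: "nsq (axis j 1 :: complex^'n) = 1"
proof -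
  have "(cmod ((axis j 1::complex^'n) $ k))\<^sup>2 = (if k = j then 1 else 0)" for k
    by (simp add: axis_def)
  then show ?thesis by (simp add: nsq_def)
qed

lemma nr_bound:
  assumes "vnorm x = 1"
  shows "cmod (cinner x (T *v x)) \<le> (\<Sum>a\<in>UNIV. \<Sum>b\<in>UNIV. cmod (T $ a $ b))"
proof -
  have n1: "nsq x = 1" using assms by (simp add: vnorm_nsq)
  have xa: "cmod (x $ a) \<le> 1" for a
  proof -
    have "(cmod (x $ a))\<^sup>2 \<le> nsq x"
      unfolding nsq_def by (rule member_le_sum) auto
    then have "(cmod (x $ a))\<^sup>2 \<le> 1\<^sup>2" using n1 by simp
    then show ?thesis by (rule power2_le_imp_le) simp
  qed
  have "cmod (cinner x (T *v x)) = cmod (\<Sum>a\<in>UNIV. \<Sum>b\<in>UNIV. cnj (x $ a) * (T $ a $ b * x $ b))"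
    by (simp add: cinner_def matrix_vector_mult_def sum_distrib_left)
  also have "\<dots> \<le> (\<Sum>a\<in>UNIV. cmod (\<Sum>b\<in>UNIV. cnj (x $ a) * (T $ a $ b * x $ b)))"
    by (rule norm_sum)
  also have "\<dots> \<le> (\<Sum>a\<in>UNIV. \<Sum>b\<in>UNIV. cmod (cnj (x $ a) * (T $ a $ b * x $ b)))"
    by (intro sum_mono norm_sum)
  also have "\<dots> \<le> (\<Sum>a\<in>UNIV. \<Sum>b\<in>UNIV. cmod (T $ a $ b))"
  proof (intro sum_mono)
    fix a b
    have "cmod (cnj (x $ a) * (T $ a $ b * x $ b)) = cmod (x $ a) * (cmod (T $ a $ b) * cmod (x $ b))"
      by (simp add: norm_mult)
    also have "\<dots> \<le> 1 * (cmod (T $ a $ b) * 1)"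
      by (intro mult_mono xa) auto
    finally show "cmod (cnj (x $ a) * (T $ a $ b * x $ b)) \<le> cmod (T $ a $ b)" by simp
  qed
  finally show ?thesis .
qed

lemma spread_upper:
  assumes "vnorm x = 1" "vnorm y = 1"
  shows "cmod (cinner x (T *v x) - cinner y (T *v y)) \<le> num_spread T"
proof -
  define C where "C = (\<Sum>a\<in>UNIV. \<Sum>b\<in>UNIV. cmod (T $ a $ b))"
  have mem: "(cinner x (T *v x), cinner y (T *v y)) \<in> num_range T \<times> num_range T"
    using assms by (auto simp: num_range_def)
  have bdd: "bdd_above ((\<lambda>p. cmod (fst p - snd p)) ` (num_range T \<times> num_range T))"
  proof (rule bdd_aboveI2)
    fix p assume "p \<in> num_range T \<times> num_range T"
    then obtain \<xi> \<eta> where p: "p = (cinner \<xi> (T *v \<xi>), cinner \<eta> (T *v \<eta>))" "vnorm \<xi> = 1" "vnorm \<eta> = 1"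
      by (auto simp: num_range_def)
    have "cmod (fst p - snd p) \<le> cmod (fst p) + cmod (snd p)" by (rule norm_triangle_ineq4)
    also have "\<dots> \<le> C + C" using p(2,3) unfolding p(1) C_def by (simp only: fst_conv snd_conv) (intro add_mono nr_bound)
    finally show "cmod (fst p - snd p) \<le> 2 * C" by simp
  qed
  show ?thesis
    unfolding num_spread_def using cSUP_upper[OF mem bdd] by simp
qed


theorem theorem1p2:
  fixes A :: "'i \<Rightarrow> complex^'n^'n" and I :: "'i set"
  assumes comm: "\<forall>i\<in>I. \<forall>j\<in>I. A i ** A j = A j ** A i"
    and conv: "(\<lambda>i. adj (A i) ** A i) summable_on I"
  shows "\<exists>B :: 'i \<Rightarrow> complex^'n^'n.
           (\<forall>i\<in>I. normal_matrix (B i)) \<and>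
           (\<forall>i\<in>I. \<forall>j\<in>I. B i ** B j = B j ** B i) \<and>
           (\<lambda>i. (hs_norm (A i - B i))\<^sup>2) summable_on I \<and>
           (\<Sum>\<^sub>\<infinity>i\<in>I. (hs_norm (A i - B i))\<^sup>2)
             \<le> real CARD('n) * num_spread (\<Sum>\<^sub>\<infinity>i\<in>I. adj (A i) ** A i)"
proof -
  obtain m and u :: "nat \<Rightarrow> complex^'n" where g: "good A I m u" and mn: "m \<le> CARD('n)"
    and cpl: "\<forall>y. y \<in> cspan u m"
    using exists_complete[OF comm] by blast
  have orth: "ortho u m" using g by (simp add: good_def)
  have uu: "cinner (u k) (u k) = 1" if "k < m" for k using orth that by (simp add: ortho_def)
  define l where "l k i = lam A u k i" for k i
  define B where "B i = Dm u m (\<lambda>k. l k i)" for i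
  have "\<forall>k. k < m \<longrightarrow> (\<exists>v. nsq v = 1 \<and> (\<forall>i\<in>I. A i *v v = l k i *s v))"
  proof (intro allI impI)
    fix k assume "k < m"
    then obtain v where v: "v \<noteq> 0" "\<forall>i\<in>I. A i *v v = l k i *s v"
      using g by (auto simp: good_def l_def)
    define r where "r = nsq v"
    have r0: "r > 0" using v nsq_nonneg[of v] nsq_eq_0[of v] by (simp add: r_def)
    define v' where "v' = complex_of_real (1 / sqrt r) *s v"
    have cm: "cmod (complex_of_real (1 / sqrt r)) = 1 / sqrt r" using r0 by (simp only: norm_of_real) simp
    have "nsq v' = (1 / sqrt r)\<^sup>2 * r" by (simp only: v'_def nsq_scale cm flip: r_def)
    also have "\<dots> = 1" using r0 by (simp add: power_divide)
    finally have "nsq v' = 1" .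
    moreover have "\<forall>i\<in>I. A i *v v' = l k i *s v'"
      using v by (simp add: v'_def matvec_scale vector_smult_assoc mult.commute)
    ultimately show "\<exists>v. nsq v = 1 \<and> (\<forall>i\<in>I. A i *v v = l k i *s v)" by blast
  qed
  then obtain V where V: "\<And>k. k < m \<Longrightarrow> nsq (V k) = 1 \<and> (\<forall>i\<in>I. A i *v V k = l k i *s V k)"
    by metis
  define L where "L X = (\<Sum>k<m. Qr (u k) X - Qr (V k) X)" for X
  have "linear L"
  proof (rule linearI)
    fix X Y show "L (X + Y) = L X + L Y"
      by (simp add: L_def Qr_add sum.distrib[symmetric] algebra_simps)
  next
    fix c :: real and X show "L (c *\<^sub>R X) = c *\<^sub>R L X"
      by (simp add: L_def Qr_scaleR sum_distrib_left algebra_simps)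
  qed
  then have bl: "bounded_linear L" by (simp add: linear_conv_bounded_linear)
  define T where "T = (\<Sum>\<^sub>\<infinity>i\<in>I. adj (A i) ** A i)"
  have hsL: "((\<lambda>i. L (adj (A i) ** A i)) has_sum L T) I"
    unfolding T_def by (rule has_sum_bounded_linear[OF bl has_sum_infsum[OF conv]])
  have Feq: "(hs_norm (A i - B i))\<^sup>2 = L (adj (A i) ** A i)" if i: "i \<in> I" for i
  proof -
    have "(hs_norm (A i - B i))\<^sup>2 = (\<Sum>k<m. nsq ((A i - B i) *v u k))"
      by (rule hs_basis[OF orth cpl])
    also have "\<dots> = L (adj (A i) ** A i)"
      unfolding L_def
    proof (rule sum.cong)
      fix k assume "k \<in> {..<m}"
      then have k: "k < m" by simp
      have "(A i - B i) *v u k = A i *v u k - cinner (u k) (A i *v u k) *s u k"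
        by (simp add: matrix_vector_mult_diff_rdistrib B_def Dm_apply_u[OF orth k] l_def lam_def)
      then have "nsq ((A i - B i) *v u k) = nsq (A i *v u k) - (cmod (l k i))\<^sup>2"
        using nsq_minus_proj[OF uu[OF k], of "A i"] by (simp add: l_def lam_def)
      also have "(cmod (l k i))\<^sup>2 = nsq (A i *v V k)"
        using V[OF k] i by (simp add: nsq_scale)
      finally show "nsq ((A i - B i) *v u k) = Qr (u k) (adj (A i) ** A i) - Qr (V k) (adj (A i) ** A i)"
        by (simp add: Qr_def nsq_AA)
    qed simp
    finally show ?thesis .
  qed
  have hsF: "((\<lambda>i. (hs_norm (A i - B i))\<^sup>2) has_sum L T) I"
    using hsL by (subst has_sum_cong[OF Feq]) auto
  have sw0: "0 \<le> num_spread T"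
  proof -
    fix j :: 'n
    have "vnorm (axis j 1 :: complex^'n) = 1" by (simp add: vnorm_nsq unit_axis)
    from spread_upper[OF this this, of T] show ?thesis by simp
  qed
  have "L T \<le> (\<Sum>k<m. num_spread T)"
    unfolding L_def
  proof (rule sum_mono)
    fix k assume "k \<in> {..<m}"
    then have k: "k < m" by simp
    have vu: "vnorm (u k) = 1" using uu[OF k] cinner_self[of "u k"] by (simp add: vnorm_nsq)
    have vV: "vnorm (V k) = 1" using V[OF k] by (simp add: vnorm_nsq)
    have "Qr (u k) T - Qr (V k) T = Re (cinner (u k) (T *v u k) - cinner (V k) (T *v V k))"
      by (simp add: Qr_def)
    also have "\<dots> \<le> cmod (cinner (u k) (T *v u k) - cinner (V k) (T *v V k))"
      by (rule complex_Re_le_cmod)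
    also have "\<dots> \<le> num_spread T" by (rule spread_upper[OF vu vV])
    finally show "Qr (u k) T - Qr (V k) T \<le> num_spread T" .
  qed
  also have "\<dots> = real m * num_spread T" by simp
  also have "\<dots> \<le> real CARD('n) * num_spread T"
    using mn sw0 by (intro mult_right_mono) auto
  finally have bound: "L T \<le> real CARD('n) * num_spread T" .
  have "\<forall>i\<in>I. normal_matrix (B i)" by (simp add: B_def Dm_normal[OF orth])
  moreover have "\<forall>i\<in>I. \<forall>j\<in>I. B i ** B j = B j ** B i" by (simp add: B_def Dm_comm[OF orth])
  moreover have "(\<lambda>i. (hs_norm (A i - B i))\<^sup>2) summable_on I" using hsF by (rule has_sum_imp_summable)
  moreover have "(\<Sum>\<^sub>\<infinity>i\<in>I. (hs_norm (A i - B i))\<^sup>2) \<le> real CARD('n) * num_spread T"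
    using infsumI[OF hsF] bound by simp
  ultimately show ?thesis unfolding T_def by blast
qed

end
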